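(* Let $G$, $\Sigma_o$, $S$ realized by $H=(Z,\Sigma,\xi,z_0)$, and $\Sigma_v\subseteq\Sigma_o$ be given, with All Attack Structure $M=(Q,\Sigma_M,f,q_0)$. For any attacker $A$ and any observation $\alpha\sigma\in P(\mathcal{L}(S_A/G))$ ($\sigma\in\Sigma_o$) such that $A$ is stealthy along $\alpha$, let $q_e=(q,\tilde q,z)=f(q_0,(\alpha\sigma)_A)$. Then $A$ is stealthy along $\alpha\sigma$ if and only if $q_e\notin Q_{\textsf{att}}$.
   Context: A plant is a finite automaton $G=(X,\Sigma,\delta,X_0)$ with partial transition function $\delta$ (extended to strings), initial states $X_0\subseteq X$; $\mathcal{L}(G,x_0)=\{s:\delta(x_0,s)\text{ defined}\}$, $\mathcal{L}(G)=\bigcup_{x_0\in X_0}\mathcal{L}(G,x_0)$. $\Sigma=\Sigma_o\dot\cup\Sigma_{uo}=\Sigma_c\dot\cup\Sigma_{uc}$, $P:\Sigma^*\to\Sigma_o^*$ the natural projection. A supervisor is $S:P(\mathcal{L}(G))\to\Gamma=\{\gamma\subseteq\Sigma:\Sigma_{uc}\subseteq\gamma\}$, realized by a deterministic automaton $H=(Z,\Sigma,\xi,z_0)$ with $\xi(z,\sigma)\neq z\Rightarrow\sigma\in\Sigma_o$ and $\Delta_H(\xi(z_0,s))=S(P(s))$ for $s\in\mathcal{L}(S/G)$ ($\Delta_H(z)$ = events defined at $z$). For any map $T$ from observable strings to subsets of $\Sigma$, $\mathcal{L}(T/G,x_0)$ is defined by $\epsilon\in\mathcal{L}(T/G,x_0)$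 and $s\sigma\in\mathcal{L}(T/G,x_0)$ iff $s\in\mathcal{L}(T/G,x_0)$, $s\sigma\in\mathcal{L}(G,x_0)$, $\sigma\in T(P(s))$; $\mathcal{L}(T/G)=\bigcup_{x_0}\mathcal{L}(T/G,x_0)$. The current-state estimate is $\mathcal{E}^C_{S/G}(\beta)=\{\delta(x_0,s):x_0\in X_0,s\in\mathcal{L}(S/G,x_0),P(s)=\beta\}$. An attacker, for vulnerable events $\Sigma_v\subseteq\Sigma_o$, is a map $A:P(\mathcal{L}(G))\to\Sigma_o\cup\{\epsilon\}$ with $A(\epsilon)=\epsilon$ and, for $\alpha\sigma\in P(\mathcal{L}(G))$, $A(\alpha\sigma)=\sigma$ if $\sigma\notin\Sigma_v$ and $A(\alpha\sigma)\in\Sigma_v\cup\{\epsilon\}$ if $\sigma\in\Sigma_v$. It induces $g_A(\epsilon)=\epsilon$, $g_A(\alpha\sigma)=g_A(\alpha)A(\alpha\sigma)$, and $S_A=S\circ g_A$. $A$ is stealthy along $\alpha\in P(\mathcal{L}(S_A/G))$ if $\mathcal{E}^C_{S/G}(g_A(\alpha))\neq\emptyset$. Operators: for $q\subseteq X$, $\gamma\subseteq\Sigma$, $\sigma\in\Sigma_o$: $\textsf{UR}_\gamma(q)=\{\delta(x,s):x\in q,s\in(\Sigma_{uo}\cap\gamma)^*\}$, $\textsf{NX}_\sigma(q)=\{\delta(x,\sigma):x\in q\}$, $\textsf{NX}_\epsilon(q)=q$, $\mathcal{O}(q,\gamma)=\{\sigma\in\Sigma_o\cap\gamma:\exists x\in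 q,\exists w\in(\Sigma_{uo}\cap\gamma)^*,\delta(x,w\sigma)\text{ defined}\}$. Augmented system: states $\tilde X\subseteq X_0\times X$, $\tilde X_0=\{(x_0,x_0)\}$, $\tilde\delta((x_0,x),\sigma)=(x_0,\delta(x,\sigma))$; $\widetilde{\textsf{UR}},\widetilde{\textsf{NX}},\mathcal{O}(\tilde q,\gamma)$ defined analogously. All Attack Structure: for $\sigma\in\Sigma_o$, $\hat\sigma$ is a doctored copy, $\hat\epsilon$ an erasure symbol; $\mathcal{V}(\sigma)=\{\hat\sigma':\sigma'\in\Sigma_v\}\cup\{\hat\epsilon\}$ if $\sigma\in\Sigma_v$, else $\{\hat\sigma\}$. $M=(Q,\Sigma_M,f,q_0)$ with $\Sigma_M=\Sigma_o\cup\{\hat\sigma\}\cup\{\hat\epsilon\}$, $q_0=(X_0,\tilde X_0,z_0)$, states reachable from $q_0$, $Q=Q_e\dot\cup Q_a$: environment states $(q,\tilde q,z)$, $q\subseteq X,\tilde q\subseteq\tilde X,z\in Z\cup\{z_{\textsf{att}}\}$ ($z_{\textsf{att}}$ new, $\Delta_H(z_{\textsf{att}})=\emptyset$); attack states $(q,\tilde q,z,\sigma)$. At $(q,\tilde q,z)$ enabled events are $\mathcal{O}(\tilde q,\Delta_H(z))$ if $z\in Z$, none if $z=z_{\textsf{att}}$, with $f((q,\tilde q,z),\sigma)=(q,\tilde q,z,\sigma)$. At $(q,\tilde q,z,\sigma)$ enabled events are $\mathcal{V}(\sigma)$, with $f((q,\tilde q,z,\sigma),\hat\sigma_a)=(q',\tilde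 q',z')$, $q'=\textsf{NX}_{\sigma_a}(\textsf{UR}_{\Delta_H(z)}(q))$, $\tilde q'=\widetilde{\textsf{NX}}_\sigma(\widetilde{\textsf{UR}}_{\Delta_H(z)}(\tilde q))$, $z'=\xi(z,\sigma_a)$ if $q'\ne\emptyset$ (with $\xi(z,\epsilon)=z$), $z'=z_{\textsf{att}}$ otherwise. $Q_{\textsf{att}}=\{(q,\tilde q,z)\in Q_e:z=z_{\textsf{att}}\}$ is the set of attack-revealing states. For an attacker $A$ and $\alpha=\sigma_1\cdots\sigma_n$, the extended string is $\alpha_A=\sigma_1\hat\sigma_{a1}\cdots\sigma_n\hat\sigma_{an}$ with $\sigma_{ai}=A(\sigma_1\cdots\sigma_i)$ (and $\hat\sigma_{ai}=\hat\epsilon$ when $\sigma_{ai}=\epsilon$). *)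

theory Defs
  imports Main
begin

fun dstar :: "('x \<Rightarrow> 'e \<Rightarrow> 'x option) \<Rightarrow> 'x \<Rightarrow> 'e list \<Rightarrow> 'x option" where
  "dstar d x [] = Some x"
| "dstar d x (e # s) = (case d x e of None \<Rightarrow> None | Some y \<Rightarrow> dstar d y s)"

(* A finite automaton G = (X, Sigma, delta, X0); Sigma is the (finite) type of events. *)
definition plant_wf :: "'x set \<Rightarrow> 'x set \<Rightarrow> ('x \<Rightarrow> 'e \<Rightarrow> 'x option) \<Rightarrow> bool" where
  "plant_wf X X0 d \<longleftrightarrow> finite X \<and> X0 \<subseteq> X \<and>
     (\<forall>x e y. d x e = Some y \<longrightarrow> x \<in> X \<and> y \<in> X)"

definition Lang :: "('x \<Rightarrow> 'e \<Rightarrow> 'x option) \<Rightarrow> 'x \<Rightarrow> 'e list set" where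
  "Lang d x0 = {s. dstar d x0 s \<noteq> None}"

definition LangG :: "('x \<Rightarrow> 'e \<Rightarrow> 'x option) \<Rightarrow> 'x set \<Rightarrow> 'e list set" where
  "LangG d X0 = (\<Union>x0\<in>X0. Lang d x0)"

definition proj :: "'e set \<Rightarrow> 'e list \<Rightarrow> 'e list" where
  "proj So s = filter (\<lambda>e. e \<in> So) s"

inductive_set Lsup :: "('x \<Rightarrow> 'e \<Rightarrow> 'x option) \<Rightarrow> 'e set \<Rightarrow> ('e list \<Rightarrow> 'e set) \<Rightarrow> 'x \<Rightarrow> 'e list set"
  for d So T x0 where
  Nil: "[] \<in> Lsup d So T x0"
| snoc: "s \<in> Lsup d So T x0 \<Longrightarrow> dstar d x0 (s @ [e]) \<noteq> None \<Longrightarrow> e \<in> T (proj So s)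
         \<Longrightarrow> s @ [e] \<in> Lsup d So T x0"

definition LsupG :: "('x \<Rightarrow> 'e \<Rightarrow> 'x option) \<Rightarrow> 'x set \<Rightarrow> 'e set \<Rightarrow> ('e list \<Rightarrow> 'e set) \<Rightarrow> 'e list set" where
  "LsupG d X0 So T = (\<Union>x0\<in>X0. Lsup d So T x0)"

definition estC :: "('x \<Rightarrow> 'e \<Rightarrow> 'x option) \<Rightarrow> 'x set \<Rightarrow> 'e set \<Rightarrow> ('e list \<Rightarrow> 'e set) \<Rightarrow> 'e list \<Rightarrow> 'x set" where
  "estC d X0 So S beta = {y. \<exists>x0\<in>X0. \<exists>s. s \<in> Lsup d So S x0 \<and> proj So s = beta \<and> dstar d x0 s = Some y}"

definition supervisor :: "('x \<Rightarrow> 'e \<Rightarrow> 'x option) \<Rightarrow> 'x set \<Rightarrow> 'e set \<Rightarrow> 'e set \<Rightarrow> ('e list \<Rightarrow> 'e set) \<Rightarrow> bool" where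
  "supervisor d X0 So Suco S \<longleftrightarrow> (\<forall>beta \<in> proj So ` LangG d X0. Suco \<subseteq> S beta)"

definition DeltaH :: "('z \<Rightarrow> 'e \<Rightarrow> 'z option) \<Rightarrow> 'z \<Rightarrow> 'e set" where
  "DeltaH xi z = {e. xi z e \<noteq> None}"

definition realizes :: "('x \<Rightarrow> 'e \<Rightarrow> 'x option) \<Rightarrow> 'x set \<Rightarrow> 'e set \<Rightarrow> ('e list \<Rightarrow> 'e set)
    \<Rightarrow> ('z \<Rightarrow> 'e \<Rightarrow> 'z option) \<Rightarrow> 'z \<Rightarrow> bool" where
  "realizes d X0 So S xi z0 \<longleftrightarrow>
     (\<forall>z e z'. xi z e = Some z' \<longrightarrow> z' \<noteq> z \<longrightarrow> e \<in> So) \<and>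
     (\<forall>s \<in> LsupG d X0 So S. \<exists>z. dstar xi z0 s = Some z \<and> DeltaH xi z = S (proj So s))"

(* A : P(L(G)) -> Sigma_o \<union> {eps}; None encodes eps *)
definition attacker :: "('x \<Rightarrow> 'e \<Rightarrow> 'x option) \<Rightarrow> 'x set \<Rightarrow> 'e set \<Rightarrow> 'e set \<Rightarrow> ('e list \<Rightarrow> 'e option) \<Rightarrow> bool" where
  "attacker d X0 So Sv A \<longleftrightarrow> A [] = None \<and>
     (\<forall>alpha e. alpha @ [e] \<in> proj So ` LangG d X0 \<longrightarrow>
        (e \<notin> Sv \<longrightarrow> A (alpha @ [e]) = Some e) \<and>
        (e \<in> Sv \<longrightarrow> A (alpha @ [e]) \<in> Some ` Sv \<union> {None}))"

definition gA :: "('e list \<Rightarrow> 'e option) \<Rightarrow> 'e list \<Rightarrow> 'e list" where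
  "gA A alpha = concat (map (\<lambda>i. case A (take (Suc i) alpha) of None \<Rightarrow> [] | Some e \<Rightarrow> [e]) [0..<length alpha])"

definition SA :: "('e list \<Rightarrow> 'e set) \<Rightarrow> ('e list \<Rightarrow> 'e option) \<Rightarrow> 'e list \<Rightarrow> 'e set" where
  "SA S A = S \<circ> gA A"

definition stealthy_along :: "('x \<Rightarrow> 'e \<Rightarrow> 'x option) \<Rightarrow> 'x set \<Rightarrow> 'e set \<Rightarrow> ('e list \<Rightarrow> 'e set)
    \<Rightarrow> ('e list \<Rightarrow> 'e option) \<Rightarrow> 'e list \<Rightarrow> bool" where
  "stealthy_along d X0 So S A alpha \<longleftrightarrow> estC d X0 So S (gA A alpha) \<noteq> {}"

definition UR :: "('x \<Rightarrow> 'e \<Rightarrow> 'x option) \<Rightarrow> 'e set \<Rightarrow> 'e set \<Rightarrow> 'x set \<Rightarrow> 'x set" where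
  "UR d So gam q = {y. \<exists>x\<in>q. \<exists>s. set s \<subseteq> (- So) \<inter> gam \<and> dstar d x s = Some y}"

definition NX :: "('x \<Rightarrow> 'e \<Rightarrow> 'x option) \<Rightarrow> 'e option \<Rightarrow> 'x set \<Rightarrow> 'x set" where
  "NX d eo q = (case eo of None \<Rightarrow> q | Some e \<Rightarrow> {y. \<exists>x\<in>q. d x e = Some y})"

definition Obs :: "('x \<Rightarrow> 'e \<Rightarrow> 'x option) \<Rightarrow> 'e set \<Rightarrow> 'x set \<Rightarrow> 'e set \<Rightarrow> 'e set" where
  "Obs d So q gam = {e \<in> So \<inter> gam. \<exists>x\<in>q. \<exists>w. set w \<subseteq> (- So) \<inter> gam \<and> dstar d x (w @ [e]) \<noteq> None}"

definition aug :: "('x \<Rightarrow> 'e \<Rightarrow> 'x option) \<Rightarrow> ('x \<times> 'x) \<Rightarrow> 'e \<Rightarrow> ('x \<times> 'x) option" where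
  "aug d p e = map_option (\<lambda>y. (fst p, y)) (d (snd p) e)"

datatype 'e mevent = MObs 'e | MHat 'e | MHatEps

(* z = None encodes z_att *)
datatype ('x, 'z, 'e) mstate =
    Env "'x set" "('x \<times> 'x) set" "'z option"
  | Att "'x set" "('x \<times> 'x) set" "'z option" 'e

definition Vset :: "'e set \<Rightarrow> 'e \<Rightarrow> 'e mevent set" where
  "Vset Sv e = (if e \<in> Sv then MHat ` Sv \<union> {MHatEps} else {MHat e})"

fun xi_eps :: "('z \<Rightarrow> 'e \<Rightarrow> 'z option) \<Rightarrow> 'z \<Rightarrow> 'e option \<Rightarrow> 'z option" where
  "xi_eps xi z None = Some z"
| "xi_eps xi z (Some e) = xi z e"

fun hat_val :: "'e mevent \<Rightarrow> 'e option" where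
  "hat_val (MHat e) = Some e"
| "hat_val MHatEps = None"
| "hat_val (MObs e) = None"

fun fM :: "('x \<Rightarrow> 'e \<Rightarrow> 'x option) \<Rightarrow> 'e set \<Rightarrow> 'e set \<Rightarrow> ('z \<Rightarrow> 'e \<Rightarrow> 'z option)
    \<Rightarrow> ('x, 'z, 'e) mstate \<Rightarrow> 'e mevent \<Rightarrow> ('x, 'z, 'e) mstate option" where
  "fM d So Sv xi (Env q qt (Some z)) ev =
     (case ev of MObs e \<Rightarrow>
        (if e \<in> Obs d So (snd ` qt) (DeltaH xi z) then Some (Att q qt (Some z) e) else None)
      | _ \<Rightarrow> None)"
| "fM d So Sv xi (Env q qt None) ev = None"
| "fM d So Sv xi (Att q qt (Some z) e) ev =
     (if ev \<in> Vset Sv e then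
        (let ea = hat_val ev;
             q' = NX d ea (UR d So (DeltaH xi z) q);
             qt' = NX (aug d) (Some e) (UR (aug d) So (DeltaH xi z) qt)
         in if q' \<noteq> {} then Some (Env q' qt' (xi_eps xi z ea))
            else Some (Env q' qt' None))
      else None)"
| "fM d So Sv xi (Att q qt None e) ev = None"

fun fMstar :: "('x \<Rightarrow> 'e \<Rightarrow> 'x option) \<Rightarrow> 'e set \<Rightarrow> 'e set \<Rightarrow> ('z \<Rightarrow> 'e \<Rightarrow> 'z option)
    \<Rightarrow> ('x, 'z, 'e) mstate \<Rightarrow> 'e mevent list \<Rightarrow> ('x, 'z, 'e) mstate option" where
  "fMstar d So Sv xi m [] = Some m"
| "fMstar d So Sv xi m (ev # evs) =
     (case fM d So Sv xi m ev of None \<Rightarrow> None | Some m' \<Rightarrow> fMstar d So Sv xi m' evs)"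

definition q0M :: "'x set \<Rightarrow> 'z \<Rightarrow> ('x, 'z, 'e) mstate" where
  "q0M X0 z0 = Env X0 {(x0, x0) | x0. x0 \<in> X0} (Some z0)"

definition Qatt :: "('x, 'z, 'e) mstate set" where
  "Qatt = {Env q qt None | q qt. True}"

fun hat_of :: "'e option \<Rightarrow> 'e mevent" where
  "hat_of None = MHatEps"
| "hat_of (Some e) = MHat e"

definition ext_string :: "('e list \<Rightarrow> 'e option) \<Rightarrow> 'e list \<Rightarrow> 'e mevent list" where
  "ext_string A alpha = concat (map (\<lambda>i. [MObs (alpha ! i), hat_of (A (take (Suc i) alpha))]) [0..<length alpha])"

end

theory Submission
  imports Defs
begin


lemma dstar_append: "dstar d x (s@t) = (case dstar d x s of None \<Rightarrow> None | Some y \<Rightarrow> dstar d y t)"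
  by (induct s arbitrary: x) (auto split: option.split)

lemma dstar_snoc: "dstar d x (s@[e]) = (case dstar d x s of None \<Rightarrow> None | Some y \<Rightarrow> d y e)"
  by (simp add: dstar_append split: option.split)

lemma Lsup_snoc_iff: "s@[e] \<in> Lsup d So T x0 \<longleftrightarrow> s \<in> Lsup d So T x0 \<and> dstar d x0 (s@[e]) \<noteq> None \<and> e \<in> T (proj So s)"
  apply (rule iffI)
   apply (erule Lsup.cases)
    apply auto[2]
  apply (auto intro: Lsup.snoc)
  done

lemma Lsup_dstar: "s \<in> Lsup d So T x0 \<Longrightarrow> dstar d x0 s \<noteq> None"
  by (induct rule: Lsup.induct) auto

lemma Lsup_prefix: "s@t \<in> Lsup d So T x0 \<Longrightarrow> s \<in> Lsup d So T x0"
proof (induct t rule: rev_induct)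
  case Nil thus ?case by simp
next
  case (snoc a t) thus ?case using Lsup_snoc_iff[of "s@t" a d So T x0] by (metis append_assoc)
qed

lemma proj_append[simp]: "proj So (s@t) = proj So s @ proj So t"
  by (simp add: proj_def)
lemma proj_Nil[simp]: "proj So [] = []" by (simp add: proj_def)
lemma proj_single[simp]: "proj So [x] = (if x \<in> So then [x] else [])" by (simp add: proj_def)
lemma proj_empty_iff: "proj So s = [] \<longleftrightarrow> set s \<subseteq> -So"
  by (auto simp: proj_def filter_empty_conv)

lemma Lsup_unobs: "set u \<subseteq> -So \<Longrightarrow> (s@u \<in> Lsup d So T x0 \<longleftrightarrow> s \<in> Lsup d So T x0 \<and> set u \<subseteq> T (proj So s) \<and> dstar d x0 (s@u) \<noteq> None)"
proof (induct u rule: rev_induct)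
  case Nil thus ?case using Lsup_dstar by auto
next
  case (snoc a u)
  have pu: "proj So u = []" using snoc.prems by (simp add: proj_empty_iff)
  have aS: "a \<notin> So" using snoc.prems by auto
  have d: "dstar d x0 (s@u@[a]) \<noteq> None \<Longrightarrow> dstar d x0 (s@u) \<noteq> None"
    using dstar_snoc[of d x0 "s@u" a] by (auto split: option.splits)
  have IH: "s@u \<in> Lsup d So T x0 \<longleftrightarrow> s \<in> Lsup d So T x0 \<and> set u \<subseteq> T (proj So s) \<and> dstar d x0 (s@u) \<noteq> None"
    using snoc.hyps snoc.prems by auto
  have eq: "s@u@[a] \<in> Lsup d So T x0 \<longleftrightarrow> s@u \<in> Lsup d So T x0 \<and> dstar d x0 (s@u@[a]) \<noteq> None \<and> a \<in> T (proj So s)"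
    using Lsup_snoc_iff[of "s@u" a d So T x0] pu by simp
  show ?case
    using IH eq d by auto
qed

lemma proj_snoc_decomp: "proj So s = beta@[e] \<Longrightarrow> \<exists>s1 u. s = s1@[e]@u \<and> proj So s1 = beta \<and> set u \<subseteq> -So"
proof (induct s arbitrary: beta rule: rev_induct)
  case Nil thus ?case by simp
next
  case (snoc a s)
  show ?case
  proof (cases "a \<in> So")
    case True
    then show ?thesis using snoc.prems by (intro exI[of _ s] exI[of _ "[]"]) auto
  next
    case False
    then have "proj So s = beta@[e]" using snoc.prems by simp
    then obtain s1 u where "s = s1@[e]@u" "proj So s1 = beta" "set u \<subseteq> -So" using snoc.hyps by blast
    then show ?thesis using False by (intro exI[of _ s1] exI[of _ "u@[a]"]) auto
  qed
qed

lemma UR_sup: "q \<subseteq> UR d So g q"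
  unfolding UR_def by (auto intro!: exI[of _ "[]"])

lemma UR_idem: "UR d So g (UR d So g q) = UR d So g q"
proof
  show "UR d So g q \<subseteq> UR d So g (UR d So g q)" by (rule UR_sup)
  show "UR d So g (UR d So g q) \<subseteq> UR d So g q"
  proof
    fix y assume "y \<in> UR d So g (UR d So g q)"
    then obtain x s where x: "x \<in> UR d So g q" "set s \<subseteq> -So \<inter> g" "dstar d x s = Some y"
      unfolding UR_def by blast
    then obtain x0 s0 where "x0 \<in> q" "set s0 \<subseteq> -So \<inter> g" "dstar d x0 s0 = Some x"
      unfolding UR_def by blast
    then show "y \<in> UR d So g q" unfolding UR_def using x
      by (intro CollectI bexI[of _ x0] exI[of _ "s0@s"]) (auto simp: dstar_append)
  qed
qed

lemma UR_empty_iff: "UR d So g q = {} \<longleftrightarrow> q = {}"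
  using UR_sup[of q d So g] by (auto simp: UR_def)

lemma E0: "estC d X0 So T [] = UR d So (T []) X0"
proof -
  have "\<And>x0 s. s \<in> Lsup d So T x0 \<and> proj So s = [] \<longleftrightarrow> set s \<subseteq> -So \<and> set s \<subseteq> T [] \<and> dstar d x0 s \<noteq> None"
  proof -
    fix x0 s
    show "?thesis x0 s" using Lsup_unobs[of s So "[]" d T x0] Lsup.Nil[of d So T x0] proj_empty_iff[of So s] by auto
  qed
  then show ?thesis unfolding estC_def UR_def by fastforce
qed



lemma dstar_aug: "dstar (aug d) p s = map_option (\<lambda>y. (fst p, y)) (dstar d (snd p) s)"
  by (induct s arbitrary: p) (auto simp: aug_def split: option.splits)
lemma snd_NX_aug: "snd ` NX (aug d) (Some e) qt = NX d (Some e) (snd ` qt)"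
  unfolding NX_def aug_def by force
lemma snd_UR_aug: "snd ` UR (aug d) So g qt = UR d So g (snd ` qt)"
proof (intro set_eqI iffI)
  fix y assume "y \<in> snd ` UR (aug d) So g qt"
  then obtain x0 p s where "p \<in> qt" "set s \<subseteq> -So \<inter> g" "dstar (aug d) p s = Some (x0, y)"
    unfolding UR_def by force
  then show "y \<in> UR d So g (snd ` qt)" unfolding UR_def dstar_aug by force
next
  fix y assume "y \<in> UR d So g (snd ` qt)"
  then obtain p s where "p \<in> qt" "set s \<subseteq> -So \<inter> g" "dstar d (snd p) s = Some y"
    unfolding UR_def by force
  then show "y \<in> snd ` UR (aug d) So g qt" unfolding UR_def dstar_aug
    by (intro image_eqI[of _ _ "(fst p, y)"]) auto
qed



lemma Estep: assumes eS: "e \<in> So"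
  shows "estC d X0 So T (beta@[e]) = (if e \<in> T beta then UR d So (T (beta@[e])) (NX d (Some e) (estC d X0 So T beta)) else {})"
proof (intro set_eqI iffI)
  fix y assume "y \<in> estC d X0 So T (beta@[e])"
  then obtain x0 s where x0: "x0 \<in> X0" and s: "s \<in> Lsup d So T x0" "proj So s = beta@[e]" "dstar d x0 s = Some y"
    unfolding estC_def by blast
  obtain s1 u where su: "s = s1@[e]@u" "proj So s1 = beta" "set u \<subseteq> -So"
    using proj_snoc_decomp[OF s(2)] by blast
  have "(s1@[e])@u \<in> Lsup d So T x0" using s su by simp
  then have L1: "s1@[e] \<in> Lsup d So T x0" "set u \<subseteq> T (beta@[e])"
    using Lsup_unobs[OF su(3), of "s1@[e]" d T x0] su eS by auto
  then have L2: "s1 \<in> Lsup d So T x0" "dstar d x0 (s1@[e]) \<noteq> None" "e \<in> T beta"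
    using Lsup_snoc_iff[of s1 e d So T x0] su by auto
  obtain y0 where y0: "dstar d x0 s1 = Some y0" using Lsup_dstar[OF L2(1)] by blast
  obtain y1 where y1: "d y0 e = Some y1" using L2(2) y0 by (auto simp: dstar_snoc)
  have "y0 \<in> estC d X0 So T beta" unfolding estC_def using x0 L2(1) su(2) y0 by blast
  then have "y1 \<in> NX d (Some e) (estC d X0 So T beta)" unfolding NX_def using y1 by auto
  moreover have "dstar d y1 u = Some y" using s(3) su(1) y0 y1 by (simp add: dstar_append)
  ultimately show "y \<in> (if e \<in> T beta then UR d So (T (beta@[e])) (NX d (Some e) (estC d X0 So T beta)) else {})"
    using L2(3) L1(2) su(3) unfolding UR_def by auto
next
  fix y assume "y \<in> (if e \<in> T beta then UR d So (T (beta@[e])) (NX d (Some e) (estC d X0 So T beta)) else {})"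
  then have eT: "e \<in> T beta" and "y \<in> UR d So (T (beta@[e])) (NX d (Some e) (estC d X0 So T beta))"
    by (auto split: if_splits)
  then obtain y1 u where y1: "y1 \<in> NX d (Some e) (estC d X0 So T beta)" and u: "set u \<subseteq> -So \<inter> T (beta@[e])" "dstar d y1 u = Some y"
    unfolding UR_def by blast
  then obtain y0 where y0: "y0 \<in> estC d X0 So T beta" "d y0 e = Some y1" unfolding NX_def by auto
  then obtain x0 s1 where s1: "x0 \<in> X0" "s1 \<in> Lsup d So T x0" "proj So s1 = beta" "dstar d x0 s1 = Some y0"
    unfolding estC_def by blast
  have ds: "dstar d x0 (s1@[e]) = Some y1" using s1 y0 by (simp add: dstar_snoc)
  have L1: "s1@[e] \<in> Lsup d So T x0" using Lsup.snoc[OF s1(2)] ds eT s1(3) by simp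
  have ds2: "dstar d x0 ((s1@[e])@u) = Some y" using ds u by (simp add: dstar_append del: append_assoc)
  have us: "set u \<subseteq> -So" using u by auto
  have "(s1@[e])@u \<in> Lsup d So T x0"
    using Lsup_unobs[OF us, of "s1@[e]" d T x0] L1 u ds2 eS s1(3) by auto
  moreover have "proj So ((s1@[e])@u) = beta@[e]" using s1(3) us eS by (auto simp: proj_def filter_empty_conv)
  ultimately show "y \<in> estC d X0 So T (beta@[e])" unfolding estC_def using s1(1) ds2 by blast
qed

lemma dstar_proj:
  assumes "\<forall>z e z'. xi z e = Some z' \<longrightarrow> z' \<noteq> z \<longrightarrow> e \<in> So"
  shows "dstar xi z s = Some z' \<Longrightarrow> dstar xi z (proj So s) = Some z'"
proof (induct s arbitrary: z)
  case Nil thus ?case by simp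
next
  case (Cons a s)
  then obtain y where y: "xi z a = Some y" "dstar xi y s = Some z'" by (auto split: option.splits)
  show ?case
  proof (cases "a \<in> So")
    case True thus ?thesis using Cons.hyps y by (simp add: proj_def)
  next
    case False then have "y = z" using assms y by blast
    thus ?thesis using Cons.hyps y False by (simp add: proj_def)
  qed
qed

lemma fMstar_append: "fMstar d So Sv xi m (xs@ys) = (case fMstar d So Sv xi m xs of None \<Rightarrow> None | Some m' \<Rightarrow> fMstar d So Sv xi m' ys)"
  by (induct xs arbitrary: m) (auto split: option.split)

lemma ext_string_snoc: "ext_string A (alpha@[s]) = ext_string A alpha @ [MObs s, hat_of (A (alpha@[s]))]"
  unfolding ext_string_def
  apply (simp add: nth_append)
  apply (rule arg_cong[where f=concat])
  apply (rule map_cong)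
   apply auto
  done

lemma gA_snoc: "gA A (alpha@[s]) = gA A alpha @ (case A (alpha@[s]) of None \<Rightarrow> [] | Some e \<Rightarrow> [e])"
  unfolding gA_def
  apply simp
  apply (rule arg_cong[where f=concat])
  apply (rule map_cong)
   apply auto
  done
lemma gA_Nil[simp]: "gA A [] = []" by (simp add: gA_def)




definition Inv where
  "Inv d X0 So S A xi z0 alpha q qt z \<longleftrightarrow>
     dstar xi z0 (gA A alpha) = Some z \<and> DeltaH xi z = S (gA A alpha) \<and>
     UR d So (S (gA A alpha)) q = estC d X0 So S (gA A alpha) \<and>
     UR d So (S (gA A alpha)) (snd ` qt) = estC d X0 So (SA S A) alpha \<and>
     estC d X0 So S (gA A alpha) \<noteq> {}"

lemma hat_val_of[simp]: "hat_val (hat_of a) = a" by (cases a) auto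

lemma step:
  assumes real: "realizes d X0 So S xi z0" and SvSo: "Sv \<subseteq> So" and att: "attacker d X0 So Sv A"
    and sS: "sigma \<in> So" and inL: "alpha @ [sigma] \<in> proj So ` LsupG d X0 So (SA S A)"
    and inv: "Inv d X0 So S A xi z0 alpha q qt z"
  shows "\<exists>q' qt' z'. fMstar d So Sv xi (Env q qt (Some z)) [MObs sigma, hat_of (A (alpha@[sigma]))] = Some (Env q' qt' z')
     \<and> (z' \<noteq> None \<longleftrightarrow> stealthy_along d X0 So S A (alpha@[sigma]))
     \<and> (\<forall>zz. z' = Some zz \<longrightarrow> Inv d X0 So S A xi z0 (alpha@[sigma]) q' qt' zz)"
proof -
  define g where "g = S (gA A alpha)"
  have dz: "dstar xi z0 (gA A alpha) = Some z" and Dz: "DeltaH xi z = g"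
    and Uq: "UR d So g q = estC d X0 So S (gA A alpha)"
    and Uqt: "UR d So g (snd ` qt) = estC d X0 So (SA S A) alpha"
    and ne: "estC d X0 So S (gA A alpha) \<noteq> {}"
    using inv unfolding Inv_def g_def by auto
  have SAa: "SA S A alpha = g" unfolding SA_def g_def by simp
  have SAa': "SA S A (alpha@[sigma]) = S (gA A (alpha@[sigma]))" unfolding SA_def by simp
  obtain x0 s where x0: "x0 \<in> X0" and s: "s \<in> Lsup d So (SA S A) x0" "proj So s = alpha@[sigma]"
    using inL unfolding LsupG_def by (metis (no_types, lifting) UN_E imageE)
  obtain y where ys: "dstar d x0 s = Some y" using Lsup_dstar[OF s(1)] by blast
  then have EA: "estC d X0 So (SA S A) (alpha@[sigma]) \<noteq> {}" unfolding estC_def using x0 s by blast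
  then have sg: "sigma \<in> g" and NXne: "NX d (Some sigma) (estC d X0 So (SA S A) alpha) \<noteq> {}"
    and EstA: "estC d X0 So (SA S A) (alpha@[sigma]) = UR d So (SA S A (alpha@[sigma])) (NX d (Some sigma) (estC d X0 So (SA S A) alpha))"
    unfolding Estep[OF sS, of d X0 "SA S A" alpha] SAa by (auto split: if_splits simp: UR_empty_iff)
  have obs: "sigma \<in> Obs d So (snd ` qt) (DeltaH xi z)"
  proof -
    obtain y0 y1 where y0: "y0 \<in> estC d X0 So (SA S A) alpha" "d y0 sigma = Some y1"
      using NXne unfolding NX_def by auto
    then obtain x w where "x \<in> snd ` qt" "set w \<subseteq> -So \<inter> g" "dstar d x w = Some y0"
      using Uqt unfolding UR_def by blast
    then show ?thesis unfolding Obs_def Dz using sS sg y0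
      by (intro CollectI conjI bexI[of _ x] exI[of _ w]) (auto simp: dstar_snoc)
  qed
  have inLG: "alpha @ [sigma] \<in> proj So ` LangG d X0"
    unfolding LangG_def Lang_def using x0 s ys by (intro image_eqI[of _ _ s]) auto
  define a where "a = A (alpha@[sigma])"
  have att2: "(sigma \<notin> Sv \<longrightarrow> a = Some sigma) \<and> (sigma \<in> Sv \<longrightarrow> a \<in> Some ` Sv \<union> {None})"
    using att inLG unfolding attacker_def a_def by simp
  have V: "hat_of a \<in> Vset Sv sigma"
    using att2 unfolding Vset_def by (cases "sigma \<in> Sv"; cases a) auto
  have aSo: "\<And>e. a = Some e \<Longrightarrow> e \<in> So"
    using att2 SvSo sS by (cases "sigma \<in> Sv") auto
  define q' where "q' = NX d a (UR d So g q)"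
  define qt' where "qt' = NX (aug d) (Some sigma) (UR (aug d) So g qt)"
  define z' where "z' = (if q' \<noteq> {} then xi_eps xi z a else None)"
  have run: "fMstar d So Sv xi (Env q qt (Some z)) [MObs sigma, hat_of a] = Some (Env q' qt' z')"
    using obs V unfolding q'_def qt'_def z'_def by (simp add: Let_def Dz)
  have sqt: "UR d So (S (gA A (alpha@[sigma]))) (snd ` qt') = estC d X0 So (SA S A) (alpha@[sigma])"
    unfolding qt'_def snd_NX_aug snd_UR_aug Uqt EstA SAa' ..
  show ?thesis
  proof (cases a)
    case None
    have gA': "gA A (alpha@[sigma]) = gA A alpha" using None unfolding a_def by (simp add: gA_snoc)
    have q'e: "q' = estC d X0 So S (gA A alpha)" unfolding q'_def None using Uq by (simp add: NX_def)
    have "z' = Some z" unfolding z'_def using None q'e ne by simp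
    moreover have "Inv d X0 So S A xi z0 (alpha@[sigma]) q' qt' z"
      unfolding Inv_def gA' using dz Dz ne sqt gA' q'e Uq UR_idem[of d So g q]
      by (simp add: g_def)
    ultimately show ?thesis using run ne unfolding a_def stealthy_along_def gA' by auto
  next
    case (Some e)
    have eSo: "e \<in> So" using aSo Some by blast
    have gA': "gA A (alpha@[sigma]) = gA A alpha @ [e]" using Some unfolding a_def by (simp add: gA_snoc)
    have q'e: "q' = NX d (Some e) (estC d X0 So S (gA A alpha))" unfolding q'_def Some Uq ..
    have ES: "estC d X0 So S (gA A (alpha@[sigma])) = (if e \<in> g then UR d So (S (gA A (alpha@[sigma]))) q' else {})"
      unfolding gA' Estep[OF eSo] q'e g_def ..
    have eg: "e \<in> g \<longleftrightarrow> xi z e \<noteq> None" using Dz unfolding DeltaH_def by auto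
    have z'e: "z' = (if q' \<noteq> {} then xi z e else None)" unfolding z'_def Some by simp
    have st: "z' \<noteq> None \<longleftrightarrow> stealthy_along d X0 So S A (alpha@[sigma])"
      unfolding stealthy_along_def ES z'e using eg by (auto simp: UR_empty_iff)
    have invs: "Inv d X0 So S A xi z0 (alpha@[sigma]) q' qt' zz" if zz: "z' = Some zz" for zz
    proof -
      have xz: "xi z e = Some zz" and q'ne: "q' \<noteq> {}" using zz z'e by (auto split: if_splits)
      have stl: "estC d X0 So S (gA A (alpha@[sigma])) \<noteq> {}" using st zz unfolding stealthy_along_def by simp
      have ds: "dstar xi z0 (gA A (alpha@[sigma])) = Some zz" unfolding gA' using dz xz by (simp add: dstar_snoc)
      obtain x1 s1 y1 where "x1 \<in> X0" "s1 \<in> Lsup d So S x1" "proj So s1 = gA A (alpha@[sigma])" "dstar d x1 s1 = Some y1"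
        using stl unfolding estC_def by (auto simp del: ex_simps)
      then have s1G: "s1 \<in> LsupG d X0 So S" and ps1: "proj So s1 = gA A (alpha@[sigma])" unfolding LsupG_def by auto
      obtain z2 where z2: "dstar xi z0 s1 = Some z2" "DeltaH xi z2 = S (proj So s1)"
        using conjunct2[OF real[unfolded realizes_def]] s1G by (elim ballE exE conjE) auto
      have "dstar xi z0 (proj So s1) = Some z2" using dstar_proj[OF conjunct1[OF real[unfolded realizes_def]] z2(1)] .
      then have "z2 = zz" using ds ps1 by simp
      then have Dzz: "DeltaH xi zz = S (gA A (alpha@[sigma]))" using z2 ps1 by simp
      have "e \<in> g" using eg xz by simp
      then show ?thesis unfolding Inv_def using ds Dzz ES sqt stl by simp
    qed
    show ?thesis using run st invs unfolding a_def by blast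
  qed
qed




lemma filter_prefix: "filter P s = beta@t \<Longrightarrow> \<exists>s' s''. s = s'@s'' \<and> filter P s' = beta"
proof (induct s arbitrary: beta)
  case Nil thus ?case by simp
next
  case (Cons a s)
  show ?case
  proof (cases "P a")
    case True
    show ?thesis
    proof (cases "beta = []")
      case True thus ?thesis by (intro exI[of _ "[]"] exI[of _ "a#s"]) simp
    next
      case False
      then obtain b beta' where bb: "beta = b#beta'" by (cases beta) auto
      then have "filter P s = beta'@t" "b = a" using Cons.prems \<open>P a\<close> by auto
      then obtain s' s'' where "s = s'@s''" "filter P s' = beta'" using Cons.hyps by blast
      thus ?thesis using \<open>P a\<close> bb \<open>b = a\<close> by (intro exI[of _ "a#s'"] exI[of _ s'']) auto
    qed
  next
    case False
    then have "filter P s = beta@t" using Cons.prems by auto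
    then obtain s' s'' where "s = s'@s''" "filter P s' = beta" using Cons.hyps by blast
    thus ?thesis using False by (intro exI[of _ "a#s'"] exI[of _ s'']) auto
  qed
qed

lemma estC_prefix: "estC d X0 So T (beta@t) \<noteq> {} \<Longrightarrow> estC d X0 So T beta \<noteq> {}"
proof -
  assume "estC d X0 So T (beta@t) \<noteq> {}"
  then obtain x0 s where x0: "x0 \<in> X0" and s: "s \<in> Lsup d So T x0" "proj So s = beta@t"
    unfolding estC_def by auto
  obtain s' s'' where ss: "s = s'@s''" "proj So s' = beta" using filter_prefix s(2) unfolding proj_def by metis
  have L: "s' \<in> Lsup d So T x0" using s(1) unfolding ss(1) by (rule Lsup_prefix)
  obtain y where "dstar d x0 s' = Some y" using Lsup_dstar[OF L] by blast
  then show ?thesis unfolding estC_def using x0 L ss(2) by blast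
qed

lemma LsupG_prefix: "beta@t \<in> proj So ` LsupG d X0 So T \<Longrightarrow> beta \<in> proj So ` LsupG d X0 So T"
proof -
  assume "beta@t \<in> proj So ` LsupG d X0 So T"
  then obtain x0 s where x0: "x0 \<in> X0" and s: "s \<in> Lsup d So T x0" "proj So s = beta@t"
    unfolding LsupG_def by (metis (no_types, lifting) UN_E imageE)
  obtain s' s'' where ss: "s = s'@s''" "proj So s' = beta" using filter_prefix s(2) unfolding proj_def by metis
  have L: "s' \<in> Lsup d So T x0" using s(1) unfolding ss(1) by (rule Lsup_prefix)
  show ?thesis unfolding LsupG_def using x0 L ss(2) by (intro image_eqI[of _ _ s']) auto
qed

lemma run:
  assumes real: "realizes d X0 So S xi z0" and SvSo: "Sv \<subseteq> So" and att: "attacker d X0 So Sv A"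
  shows "alpha \<in> proj So ` LsupG d X0 So (SA S A) \<Longrightarrow> stealthy_along d X0 So S A alpha \<Longrightarrow>
    \<exists>q qt z. fMstar d So Sv xi (q0M X0 z0) (ext_string A alpha) = Some (Env q qt (Some z)) \<and> Inv d X0 So S A xi z0 alpha q qt z"
proof (induct alpha rule: rev_induct)
  case Nil
  have X0ne: "X0 \<noteq> {}" using Nil.prems(1) unfolding LsupG_def by auto
  then obtain x0 where x0: "x0 \<in> X0" by blast
  have "[] \<in> LsupG d X0 So S" unfolding LsupG_def using x0 Lsup.Nil[of d So S x0] by blast
  then have "\<exists>z. dstar xi z0 [] = Some z \<and> DeltaH xi z = S (proj So [])"
    by (rule bspec[OF conjunct2[OF real[unfolded realizes_def]]])
  then have Dz: "DeltaH xi z0 = S []" by simp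
  have sn: "snd ` {(x0, x0) |x0. x0 \<in> X0} = X0" by force
  have SA0: "SA S A [] = S []" unfolding SA_def by simp
  have ne: "estC d X0 So S [] \<noteq> {}" using Nil.prems(2) unfolding stealthy_along_def by simp
  have "Inv d X0 So S A xi z0 [] X0 {(x0, x0) |x0. x0 \<in> X0} z0"
    unfolding Inv_def gA_Nil sn using Dz ne E0[of d X0 So S] E0[of d X0 So "SA S A"] SA0 by simp
  then show ?case by (simp add: ext_string_def q0M_def)
next
  case (snoc x alpha)
  obtain s where ps: "proj So s = alpha@[x]" using snoc.prems(1) by (metis imageE)
  have "x \<in> set (proj So s)" unfolding ps by simp
  then have xS: "x \<in> So" unfolding proj_def by simp
  have a1: "alpha \<in> proj So ` LsupG d X0 So (SA S A)" by (rule LsupG_prefix[OF snoc.prems(1)])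
  have a2: "stealthy_along d X0 So S A alpha"
    using estC_prefix[of d X0 So S "gA A alpha"] snoc.prems(2) unfolding stealthy_along_def gA_snoc by blast
  obtain q qt z where r: "fMstar d So Sv xi (q0M X0 z0) (ext_string A alpha) = Some (Env q qt (Some z))"
    and i: "Inv d X0 So S A xi z0 alpha q qt z" using snoc.hyps[OF a1 a2] by blast
  obtain q' qt' z' where r2: "fMstar d So Sv xi (Env q qt (Some z)) [MObs x, hat_of (A (alpha@[x]))] = Some (Env q' qt' z')"
    and st: "z' \<noteq> None \<longleftrightarrow> stealthy_along d X0 So S A (alpha@[x])"
    and i2: "\<forall>zz. z' = Some zz \<longrightarrow> Inv d X0 So S A xi z0 (alpha@[x]) q' qt' zz"
    using step[OF real SvSo att xS snoc.prems(1) i] by blast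
  obtain zz where "z' = Some zz" using st snoc.prems(2) by auto
  then show ?case using r r2 i2 by (auto simp: ext_string_snoc fMstar_append)
qed

theorem lemma1:
  fixes X X0 :: "'x set" and d :: "'x \<Rightarrow> 'e \<Rightarrow> 'x option"
    and So Suco Sv :: "'e set" and S :: "'e list \<Rightarrow> 'e set"
    and xi :: "'z \<Rightarrow> 'e \<Rightarrow> 'z option" and z0 :: 'z
    and A :: "'e list \<Rightarrow> 'e option" and alpha :: "'e list" and sigma :: 'e
  assumes "finite (UNIV :: 'e set)"
    and "plant_wf X X0 d"
    and "supervisor d X0 So Suco S"
    and "realizes d X0 So S xi z0"
    and "Sv \<subseteq> So"
    and "attacker d X0 So Sv A"
    and "sigma \<in> So"
    and "alpha @ [sigma] \<in> proj So ` LsupG d X0 So (SA S A)"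
    and "stealthy_along d X0 So S A alpha"
  shows "\<exists>qe. fMstar d So Sv xi (q0M X0 z0) (ext_string A (alpha @ [sigma])) = Some qe
           \<and> (stealthy_along d X0 So S A (alpha @ [sigma]) \<longleftrightarrow> qe \<notin> Qatt)"
proof -
  have a1: "alpha \<in> proj So ` LsupG d X0 So (SA S A)" using LsupG_prefix assms(8) by blast
  obtain q qt z where r: "fMstar d So Sv xi (q0M X0 z0) (ext_string A alpha) = Some (Env q qt (Some z))"
    and i: "Inv d X0 So S A xi z0 alpha q qt z" using run[OF assms(4,5,6) a1 assms(9)] by blast
  obtain q' qt' z' where r2: "fMstar d So Sv xi (Env q qt (Some z)) [MObs sigma, hat_of (A (alpha@[sigma]))] = Some (Env q' qt' z')"
    and st: "z' \<noteq> None \<longleftrightarrow> stealthy_along d X0 So S A (alpha@[sigma])"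
    using step[OF assms(4,5,6,7,8) i] by blast
  have "fMstar d So Sv xi (q0M X0 z0) (ext_string A (alpha @ [sigma])) = Some (Env q' qt' z')"
    using r r2 by (simp add: ext_string_snoc fMstar_append)
  moreover have "Env q' qt' z' \<notin> Qatt \<longleftrightarrow> z' \<noteq> None" unfolding Qatt_def by auto
  ultimately show ?thesis using st by blast
qed


end
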